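(* If the semimetric space $(T,\rho_{2,T})$ is complete, then the semimetric space $(T\times[0,\infty),\rho_2)$ is complete.
   Context: $(U_1(t))_{t\in T}$ is a process with uniform $(0,1)$ margins such that the bivariate tail copulas $R_{s,t}(x,y)=\lim_{u\downarrow0}u^{-1}\mathbb{P}\{U_1(s)\le ux,U_1(t)\le uy\}$ exist for all $s,t\in T$, $x,y\ge0$. $\rho_{2,T}(s,t)=[2\{1-R_{s,t}(1,1)\}]^{1/2}$ on $T$ and $\rho_2((s,x),(t,y))=(x-2R_{s,t}(x,y)+y)^{1/2}$ on $T\times[0,\infty)$. *)

theory Defs
  imports "HOL-Probability.Probability"
begin

definition semimetric_complete :: "'a set \<Rightarrow> ('a \<Rightarrow> 'a \<Rightarrow> real) \<Rightarrow> bool" where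
  "semimetric_complete S d \<longleftrightarrow>
     (\<forall>\<sigma>. (\<forall>n. \<sigma> n \<in> S) \<and>
          (\<forall>e>0. \<exists>N. \<forall>m\<ge>N. \<forall>n\<ge>N. d (\<sigma> m) (\<sigma> n) < e)
       \<longrightarrow> (\<exists>z\<in>S. ((\<lambda>n. d (\<sigma> n) z) \<longlonglongrightarrow> 0)))"

definition rho2T :: "('t \<Rightarrow> 't \<Rightarrow> real \<Rightarrow> real \<Rightarrow> real) \<Rightarrow> 't \<Rightarrow> 't \<Rightarrow> real" where
  "rho2T R s t = sqrt (2 * (1 - R s t 1 1))"

definition rho2 :: "('t \<Rightarrow> 't \<Rightarrow> real \<Rightarrow> real \<Rightarrow> real) \<Rightarrow> 't \<times> real \<Rightarrow> 't \<times> real \<Rightarrow> real" where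
  "rho2 R p q = sqrt (snd p - 2 * R (fst p) (fst q) (snd p) (snd q) + snd q)"

end

theory Submission
  imports Defs
begin

locale tcop = prob_space M for M :: "'w measure" +
  fixes U :: "'t \<Rightarrow> 'w \<Rightarrow> real" and T :: "'t set"
    and R :: "'t \<Rightarrow> 't \<Rightarrow> real \<Rightarrow> real \<Rightarrow> real"
  assumes meas: "\<And>t. t \<in> T \<Longrightarrow> U t \<in> borel_measurable M"
    and unif: "\<And>t u. t \<in> T \<Longrightarrow> 0 \<le> u \<Longrightarrow> u \<le> 1 \<Longrightarrow>
                 measure M {\<omega> \<in> space M. U t \<omega> \<le> u} = u"
    and tail: "\<And>s t x y. s \<in> T \<Longrightarrow> t \<in> T \<Longrightarrow> 0 \<le> x \<Longrightarrow> 0 \<le> y \<Longrightarrow>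
                 ((\<lambda>u. measure M {\<omega> \<in> space M. U s \<omega> \<le> u * x \<and> U t \<omega> \<le> u * y} / u)
                   \<longlongrightarrow> R s t x y) (at_right 0)"
begin

lemma sets1: "s \<in> T \<Longrightarrow> {\<omega> \<in> space M. U s \<omega> \<le> c} \<in> sets M"
  using meas[of s] by measurable

lemma sets2: "s \<in> T \<Longrightarrow> t \<in> T \<Longrightarrow> {\<omega> \<in> space M. U s \<omega> \<le> c \<and> U t \<omega> \<le> d} \<in> sets M"
  using meas[of s] meas[of t] by measurable

lemma ev_small: "0 \<le> (c::real) \<Longrightarrow> eventually (\<lambda>u. 0 < u \<and> u * c \<le> 1) (at_right 0)"
proof (rule eventually_at_rightI[of _ "1/(c+1)"])
  fix u assume c: "0 \<le> c" and u: "u \<in> {0<..<1/(c+1)}"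
  hence "u * (c+1) < 1" by (simp add: field_simps)
  moreover have "u * c \<le> u * (c+1)" using u by auto
  ultimately have "u * c \<le> 1" by linarith
  then show "0 < u \<and> u * c \<le> 1" using u by auto
qed auto

lemma R_le1: assumes "s \<in> T" "t \<in> T" "0 \<le> x" "0 \<le> y" shows "R s t x y \<le> x"
proof (rule tendsto_le[OF trivial_limit_at_right_real tendsto_const tail[OF assms]])
  show "\<forall>\<^sub>F u in at_right 0. measure M {\<omega> \<in> space M. U s \<omega> \<le> u * x \<and> U t \<omega> \<le> u * y} / u \<le> x"
    using ev_small[OF assms(3)]
  proof eventually_elim
    case (elim u)
    have "measure M {\<omega> \<in> space M. U s \<omega> \<le> u * x \<and> U t \<omega> \<le> u * y}
       \<le> measure M {\<omega> \<in> space M. U s \<omega> \<le> u * x}"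
      by (rule finite_measure_mono[OF _ sets1[OF assms(1)]]) auto
    also have "\<dots> = u * x" using unif[OF assms(1), of "u*x"] elim assms by simp
    finally show ?case using elim by (simp add: pos_divide_le_eq mult.commute)
  qed
qed

lemma R_le2: assumes "s \<in> T" "t \<in> T" "0 \<le> x" "0 \<le> y" shows "R s t x y \<le> y"
proof (rule tendsto_le[OF trivial_limit_at_right_real tendsto_const tail[OF assms]])
  show "\<forall>\<^sub>F u in at_right 0. measure M {\<omega> \<in> space M. U s \<omega> \<le> u * x \<and> U t \<omega> \<le> u * y} / u \<le> y"
    using ev_small[OF assms(4)]
  proof eventually_elim
    case (elim u)
    have "measure M {\<omega> \<in> space M. U s \<omega> \<le> u * x \<and> U t \<omega> \<le> u * y}
       \<le> measure M {\<omega> \<in> space M. U t \<omega> \<le> u * y}"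
      by (rule finite_measure_mono[OF _ sets1[OF assms(2)]]) auto
    also have "\<dots> = u * y" using unif[OF assms(2), of "u*y"] elim assms by simp
    finally show ?case using elim by (simp add: pos_divide_le_eq mult.commute)
  qed
qed

lemma R_nonneg: assumes "s \<in> T" "t \<in> T" "0 \<le> x" "0 \<le> y" shows "0 \<le> R s t x y"
proof (rule tendsto_le[OF trivial_limit_at_right_real tail[OF assms] tendsto_const])
  show "\<forall>\<^sub>F u in at_right 0. 0 \<le> measure M {\<omega> \<in> space M. U s \<omega> \<le> u * x \<and> U t \<omega> \<le> u * y} / u"
    using ev_small[OF assms(3)] by eventually_elim simp
qed

lemma R_diag: assumes "s \<in> T" "0 \<le> a" "0 \<le> b" shows "R s s a b = min a b"
proof (rule tendsto_unique[OF trivial_limit_at_right_real tail[OF assms(1,1,2,3)]])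
  show "((\<lambda>u. measure M {\<omega> \<in> space M. U s \<omega> \<le> u * a \<and> U s \<omega> \<le> u * b} / u) \<longlongrightarrow> min a b) (at_right 0)"
  proof (rule Lim_transform_eventually[OF tendsto_const])
    show "\<forall>\<^sub>F u in at_right 0. min a b = measure M {\<omega> \<in> space M. U s \<omega> \<le> u * a \<and> U s \<omega> \<le> u * b} / u"
      using ev_small[OF assms(2)]
    proof eventually_elim
      case (elim u)
      have e: "u * min a b = min (u*a) (u*b)" using elim by (simp add: min_mult_distrib_left)
      have "{\<omega> \<in> space M. U s \<omega> \<le> u * a \<and> U s \<omega> \<le> u * b} = {\<omega> \<in> space M. U s \<omega> \<le> u * min a b}"
        unfolding e by auto
      moreover have "u * min a b \<le> 1" using elim e by linarith
      moreover have "0 \<le> u * min a b" using elim assms by simp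
      ultimately have "measure M {\<omega> \<in> space M. U s \<omega> \<le> u * a \<and> U s \<omega> \<le> u * b} = u * min a b"
        using unif[OF assms(1)] by simp
      then show ?case using elim by simp
    qed
  qed
qed

lemma R_hom: assumes "s \<in> T" "t \<in> T" "0 < c" shows "R s t c c = c * R s t 1 1"
proof (rule tendsto_unique[OF trivial_limit_at_right_real tail[OF assms(1,2)]])
  show "0 \<le> c" using assms by simp
  have fl: "filterlim (\<lambda>u. u * c) (at_right 0) (at_right 0)"
    unfolding filterlim_at
  proof
    show "\<forall>\<^sub>F u in at_right 0. u * c \<in> {0<..} \<and> u * c \<noteq> 0"
      using ev_small[of c] assms by (auto elim: eventually_mono)
    have "((\<lambda>u. u * c) \<longlongrightarrow> 0 * c) (at_right 0)"
      by (intro tendsto_intros)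
    then show "((\<lambda>u. u * c) \<longlongrightarrow> 0) (at_right 0)" by simp
  qed
  have "((\<lambda>u. c * (measure M {\<omega> \<in> space M. U s \<omega> \<le> (u * c) * 1 \<and> U t \<omega> \<le> (u*c) * 1} / (u * c)))
     \<longlongrightarrow> c * R s t 1 1) (at_right 0)"
    by (intro tendsto_mult_left filterlim_compose[OF tail[OF assms(1,2)] fl]) auto
  then show "((\<lambda>u. measure M {\<omega> \<in> space M. U s \<omega> \<le> u * c \<and> U t \<omega> \<le> u * c} / u) \<longlongrightarrow> c * R s t 1 1) (at_right 0)"
    by (rule Lim_transform_eventually)
       (use ev_small[of c] assms in \<open>auto elim!: eventually_mono\<close>)
qed (use assms in auto)

lemma R_tri: assumes "s \<in> T" "t \<in> T" "v \<in> T" "0 \<le> x" "0 \<le> y" "0 \<le> z"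
  shows "R s t x y + R t v y z - R s v x z \<le> y"
proof (rule tendsto_le[OF trivial_limit_at_right_real tendsto_const
      tendsto_diff[OF tendsto_add[OF tail[of s t x y] tail[of t v y z]] tail[of s v x z]]])
  show "\<forall>\<^sub>F u in at_right 0. measure M {\<omega> \<in> space M. U s \<omega> \<le> u * x \<and> U t \<omega> \<le> u * y} / u +
          measure M {\<omega> \<in> space M. U t \<omega> \<le> u * y \<and> U v \<omega> \<le> u * z} / u -
          measure M {\<omega> \<in> space M. U s \<omega> \<le> u * x \<and> U v \<omega> \<le> u * z} / u \<le> y"
    using ev_small[OF assms(5)]
  proof eventually_elim
    case (elim u)
    define A where "A = {\<omega> \<in> space M. U s \<omega> \<le> u * x}"
    define B where "B = {\<omega> \<in> space M. U t \<omega> \<le> u * y}"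
    define C where "C = {\<omega> \<in> space M. U v \<omega> \<le> u * z}"
    have AB: "{\<omega> \<in> space M. U s \<omega> \<le> u * x \<and> U t \<omega> \<le> u * y} = A \<inter> B" unfolding A_def B_def by auto
    have BC: "{\<omega> \<in> space M. U t \<omega> \<le> u * y \<and> U v \<omega> \<le> u * z} = B \<inter> C" unfolding C_def B_def by auto
    have AC: "{\<omega> \<in> space M. U s \<omega> \<le> u * x \<and> U v \<omega> \<le> u * z} = A \<inter> C" unfolding A_def C_def by auto
    have sA: "A \<in> sets M" unfolding A_def by (rule sets1[OF assms(1)])
    have sB: "B \<in> sets M" unfolding B_def by (rule sets1[OF assms(2)])
    have sC: "C \<in> sets M" unfolding C_def by (rule sets1[OF assms(3)])
    have "measure M (A \<inter> B \<union> B \<inter> C) = measure M (A \<inter> B) + measure M (B \<inter> C) - measure M (A \<inter> B \<inter> (B \<inter> C))"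
      by (rule measure_Un3) (use sA sB sC in \<open>auto simp: fmeasurable_eq_sets\<close>)
    moreover have "measure M (A \<inter> B \<union> B \<inter> C) \<le> measure M B"
      by (rule finite_measure_mono[OF _ sB]) auto
    moreover have "measure M (A \<inter> B \<inter> (B \<inter> C)) \<le> measure M (A \<inter> C)"
      by (rule finite_measure_mono) (use sA sC in auto)
    moreover have "measure M B = u * y" unfolding B_def using unif[OF assms(2), of "u*y"] elim assms by simp
    ultimately have "measure M (A \<inter> B) + measure M (B \<inter> C) - measure M (A \<inter> C) \<le> u * y" by linarith
    then show ?case unfolding AB BC AC using elim
      by (simp add: diff_divide_distrib[symmetric] add_divide_distrib[symmetric] pos_divide_le_eq mult.commute)
  qed
qed (use assms in auto)

end

theorem lemmaA9:
  fixes M :: "'w measure" and U :: "'t \<Rightarrow> 'w \<Rightarrow> real" and T :: "'t set"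
    and R :: "'t \<Rightarrow> 't \<Rightarrow> real \<Rightarrow> real \<Rightarrow> real"
  assumes "prob_space M"
    and meas: "\<And>t. t \<in> T \<Longrightarrow> U t \<in> borel_measurable M"
    and unif: "\<And>t u. t \<in> T \<Longrightarrow> 0 \<le> u \<Longrightarrow> u \<le> 1 \<Longrightarrow>
                 measure M {\<omega> \<in> space M. U t \<omega> \<le> u} = u"
    and tail: "\<And>s t x y. s \<in> T \<Longrightarrow> t \<in> T \<Longrightarrow> 0 \<le> x \<Longrightarrow> 0 \<le> y \<Longrightarrow>
                 ((\<lambda>u. measure M {\<omega> \<in> space M. U s \<omega> \<le> u * x \<and> U t \<omega> \<le> u * y} / u)
                   \<longlongrightarrow> R s t x y) (at_right 0)"
    and complete: "semimetric_complete T (rho2T R)"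
  shows "semimetric_complete (T \<times> {0..}) (rho2 R)"
proof -
  interpret tcop M U T R
    using assms by (simp add: tcop_def tcop_axioms_def)
  define DD where "DD = (\<lambda>(s,a) (t,b). a - 2 * R s t a b + b)"
  have rho: "rho2 R (s,a) (t,b) = sqrt (DD (s,a) (t,b))" for s t a b
    by (simp add: rho2_def DD_def)
  have Dtri: "DD (s,a) (v,c) \<le> DD (s,a) (t,b) + DD (t,b) (v,c)"
    if "s \<in> T" "t \<in> T" "v \<in> T" "0 \<le> a" "0 \<le> b" "0 \<le> c" for s t v a b c
    using R_tri[OF that] by (simp add: DD_def)
  have Dge: "\<bar>a - b\<bar> \<le> DD (s,a) (t,b)"
    if "s \<in> T" "t \<in> T" "0 \<le> a" "0 \<le> b" for s t a b
    using R_le1[OF that] R_le2[OF that] by (simp add: DD_def)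
  have Ddiag: "DD (s,a) (s,b) = \<bar>a - b\<bar>" if "s \<in> T" "0 \<le> a" "0 \<le> b" for s a b
    using R_diag[OF that] by (simp add: DD_def min_def)
  have Dhom: "DD (s,c) (t,c) = c * (rho2T R s t)^2" if "s \<in> T" "t \<in> T" "0 < c" for s t c
  proof -
    have "R s t 1 1 \<le> 1" using R_le1[OF that(1,2)] by simp
    then show ?thesis using R_hom[OF that] by (simp add: DD_def rho2T_def algebra_simps)
  qed
  show ?thesis
    unfolding semimetric_complete_def
  proof (intro allI impI, elim conjE)
    fix \<sigma> :: "nat \<Rightarrow> 't \<times> real"
    assume mem: "\<forall>n. \<sigma> n \<in> T \<times> {0..}"
      and cau: "\<forall>e>0. \<exists>N. \<forall>m\<ge>N. \<forall>n\<ge>N. rho2 R (\<sigma> m) (\<sigma> n) < e"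
    define t where "t = (\<lambda>n. fst (\<sigma> n))"
    define x where "x = (\<lambda>n. snd (\<sigma> n))"
    have sig: "\<sigma> n = (t n, x n)" for n by (simp add: t_def x_def)
    have tT: "t n \<in> T" and x0: "0 \<le> x n" for n using mem[rule_format, of n] by (auto simp: sig)
    have cauD: "\<exists>N. \<forall>m\<ge>N. \<forall>n\<ge>N. DD (t m, x m) (t n, x n) < e" if epos: "e > 0" for e
    proof -
      obtain N where N: "\<forall>m\<ge>N. \<forall>n\<ge>N. rho2 R (\<sigma> m) (\<sigma> n) < sqrt e"
        using cau[rule_format, of "sqrt e"] epos by auto
      show ?thesis
        by (rule exI[of _ N]) (use N in \<open>auto simp: sig rho\<close>)
    qed
    have "Cauchy x"
    proof (rule CauchyI)
      fix e :: real assume "e > 0"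
      then obtain N where N: "\<forall>m\<ge>N. \<forall>n\<ge>N. DD (t m, x m) (t n, x n) < e" using cauD by blast
      show "\<exists>M. \<forall>m\<ge>M. \<forall>n\<ge>M. norm (x m - x n) < e"
      proof (intro exI[of _ N] allI impI)
        fix m n assume "m \<ge> N" "n \<ge> N"
        then have "DD (t m, x m) (t n, x n) < e" using N by blast
        then show "norm (x m - x n) < e" using Dge[OF tT[of m] tT[of n] x0[of m] x0[of n]] by simp
      qed
    qed
    then obtain xl where xl: "x \<longlonglongrightarrow> xl" using Cauchy_convergent_iff convergent_def by blast
    have xl0: "0 \<le> xl" by (rule LIMSEQ_le_const[OF xl]) (use x0 in auto)
    show "\<exists>z\<in>T \<times> {0..}. (\<lambda>n. rho2 R (\<sigma> n) z) \<longlonglongrightarrow> 0"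
    proof (cases "xl = 0")
      case True
      have "R (t n) (t 0) (x n) 0 = 0" for n
        using R_le2[OF tT[of n] tT[of 0] x0[of n], of 0] R_nonneg[OF tT[of n] tT[of 0] x0[of n], of 0] by simp
      then have eq: "rho2 R (\<sigma> n) (t 0, 0) = sqrt (x n)" for n by (simp add: sig rho DD_def)
      have "(\<lambda>n. sqrt (x n)) \<longlonglongrightarrow> sqrt 0" by (intro tendsto_intros) (use xl True in simp)
      then show ?thesis using tT[of 0] by (intro bexI[of _ "(t 0, 0)"]) (auto simp: eq)
    next
      case False
      hence xlp: "0 < xl" using xl0 by simp
      have "\<exists>N. \<forall>m\<ge>N. \<forall>n\<ge>N. rho2T R (t m) (t n) < e" if e: "e > 0" for e
      proof -
        define d where "d = e^2 * xl / 3"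
        have d: "d > 0" using e xlp by (simp add: d_def)
        obtain N1 where N1: "\<forall>m\<ge>N1. \<forall>n\<ge>N1. DD (t m, x m) (t n, x n) < d" using cauD d by blast
        obtain N2 where N2: "\<forall>n\<ge>N2. norm (x n - xl) < d" using xl d LIMSEQ_iff by blast
        show ?thesis
        proof (intro exI[of _ "max N1 N2"] allI impI)
          fix m n assume m: "m \<ge> max N1 N2" and n: "n \<ge> max N1 N2"
          have "xl * (rho2T R (t m) (t n))^2 = DD (t m, xl) (t n, xl)" using Dhom[OF tT[of m] tT[of n] xlp] by simp
          also have "\<dots> \<le> DD (t m, xl) (t m, x m) + DD (t m, x m) (t n, xl)"
            by (rule Dtri) (use tT x0 xl0 in auto)
          also have "DD (t m, x m) (t n, xl) \<le> DD (t m, x m) (t n, x n) + DD (t n, x n) (t n, xl)"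
            by (rule Dtri) (use tT x0 xl0 in auto)
          finally have le: "xl * (rho2T R (t m) (t n))^2 \<le> DD (t m, xl) (t m, x m) + (DD (t m, x m) (t n, x n) + DD (t n, x n) (t n, xl))"
            by simp
          have "DD (t m, x m) (t n, x n) < d" using N1 m n by auto
          moreover have "\<bar>x m - xl\<bar> < d" "\<bar>x n - xl\<bar> < d" using N2 m n by auto
          ultimately have "xl * (rho2T R (t m) (t n))^2 < 3 * d"
            using le Ddiag[OF tT[of m] xl0 x0[of m]] Ddiag[OF tT[of n] x0[of n] xl0]
            by (simp add: abs_minus_commute)
          then have "xl * (rho2T R (t m) (t n))^2 < xl * e^2" by (simp add: d_def mult.commute)
          then have "(rho2T R (t m) (t n))^2 < e^2" using xlp by simp
          then show "rho2T R (t m) (t n) < e" using e by (meson less_imp_le power2_less_imp_less)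
        qed
      qed
      then obtain \<tau> where \<tau>: "\<tau> \<in> T" and lim\<tau>: "(\<lambda>n. rho2T R (t n) \<tau>) \<longlonglongrightarrow> 0"
        using complete tT unfolding semimetric_complete_def by blast
      have up: "DD (t n, x n) (\<tau>, xl) \<le> \<bar>x n - xl\<bar> + xl * (rho2T R (t n) \<tau>)^2" for n
      proof -
        have "DD (t n, x n) (\<tau>, xl) \<le> DD (t n, x n) (t n, xl) + DD (t n, xl) (\<tau>, xl)"
          by (rule Dtri) (use tT x0 xl0 \<tau> in auto)
        then show ?thesis using Ddiag[OF tT[of n] x0[of n] xl0] Dhom[OF tT[of n] \<tau> xlp] by simp
      qed
      have lo: "0 \<le> DD (t n, x n) (\<tau>, xl)" for n
        using Dge[OF tT[of n] \<tau> x0[of n] xl0] by linarith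
      have "(\<lambda>n. \<bar>x n - xl\<bar> + xl * (rho2T R (t n) \<tau>)^2) \<longlonglongrightarrow> \<bar>xl - xl\<bar> + xl * 0^2"
        by (intro tendsto_intros xl lim\<tau>)
      then have "(\<lambda>n. \<bar>x n - xl\<bar> + xl * (rho2T R (t n) \<tau>)^2) \<longlonglongrightarrow> 0" by simp
      then have "(\<lambda>n. DD (t n, x n) (\<tau>, xl)) \<longlonglongrightarrow> 0"
        by (rule real_tendsto_sandwich[OF _ _ tendsto_const, rotated 2]) (use up lo in auto)
      then have "(\<lambda>n. sqrt (DD (t n, x n) (\<tau>, xl))) \<longlonglongrightarrow> sqrt 0" by (intro tendsto_intros)
      then show ?thesis using \<tau> xl0 by (intro bexI[of _ "(\<tau>, xl)"]) (auto simp: sig rho)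
    qed
  qed
qed

end
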